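(* Let $q\ge2$ and let $U$ be a dual-unitary operator on $\mathbb{C}^q\otimes\mathbb{C}^q$. Then $$\|\mathcal{M}_+^U\|_2^2=\|\mathcal{M}_-^U\|_2^2=1+(q^2-1)\bigl(1-e_p(U)\bigr),\qquad \|\mathcal{M}_+^U-\mathcal{P}\|_2^2=(q^2-1)\bigl(1-e_p(U)\bigr),$$ where $\mathcal{P}(a)=\operatorname{tr}(a)I/q$. In particular these norms are unchanged when $U$ is replaced by $(u_1\otimes u_2)U(v_1\otimes v_2)$ for any single-site unitaries $u_i,v_i\in U(q)$.
   Context: Product basis $|i\alpha\rangle=|i\rangle\otimes|\alpha\rangle$ of $\mathbb{C}^q\otimes\mathbb{C}^q$. For an operator $X$ define the realignment $\langle\beta\alpha|X^{R_1}|ji\rangle=\langle i\alpha|X|j\beta\rangle$. A unitary $U$ is dual-unitary if $U^{R_1}$ is unitary. $S$ is the swap, $S|\phi\rangle|\psi\rangle=|\psi\rangle|\phi\rangle$. The operator entanglement is $E(U)=1-q^{-4}\operatorname{tr}[(U^{R_1}U^{R_1\dagger})^2]$ and the entangling power is $e_p(U)=\frac{E(U)+E(US)-E(S)}{E(S)}$ with $E(S)=1-1/q^2$. The maps $\mathcal{M}_+^U(a)=\frac1q\operatorname{tr}_1[U^\dagger(a\otimes I)U]$ and $\mathcal{M}_-^U(a)=\frac1q\operatorname{tr}_2[U^\dagger(I\otimes a)U]$ act on $q\times q$ complex matrices. For a linear map $\mathcal{N}$ on $q\times q$ matrices, $\|\mathcal{N}\|_2^2=\sum_{j,l}\operatorname{tr}[\mathcal{N}(E_{jl})^\dagger\mathcal{N}(E_{jl})]$,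 with $E_{jl}=|j\rangle\langle l|$ the matrix units (Hilbert–Schmidt norm of the map w.r.t. the inner product $\operatorname{tr}(a^\dagger b)$). *)

theory Defs
  imports Complex_Main
begin

text \<open>Operators on C^q (x) C^q are represented by their matrix entries in the product
basis: X (i,a) (j,b) = <i a| X |j b>, indices ranging over {..<q} x {..<q}.
Single-site operators are q x q matrices m i j = <i|m|j>, indices in {..<q}.\<close>

type_synonym op1 = "nat \<Rightarrow> nat \<Rightarrow> complex"
type_synonym op2 = "nat \<times> nat \<Rightarrow> nat \<times> nat \<Rightarrow> complex"

definition idx2 :: "nat \<Rightarrow> (nat \<times> nat) set" where
  "idx2 q = {..<q} \<times> {..<q}"

definition mult2 :: "nat \<Rightarrow> op2 \<Rightarrow> op2 \<Rightarrow> op2" where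
  "mult2 q X Y = (\<lambda>a b. \<Sum>c\<in>idx2 q. X a c * Y c b)"

definition adj2 :: "op2 \<Rightarrow> op2" where
  "adj2 X = (\<lambda>a b. cnj (X b a))"

definition id2 :: op2 where
  "id2 = (\<lambda>a b. if a = b then 1 else 0)"

definition trace2 :: "nat \<Rightarrow> op2 \<Rightarrow> complex" where
  "trace2 q X = (\<Sum>a\<in>idx2 q. X a a)"

definition unitary2 :: "nat \<Rightarrow> op2 \<Rightarrow> bool" where
  "unitary2 q U \<longleftrightarrow>
     (\<forall>a\<in>idx2 q. \<forall>b\<in>idx2 q. mult2 q (adj2 U) U a b = id2 a b) \<and>
     (\<forall>a\<in>idx2 q. \<forall>b\<in>idx2 q. mult2 q U (adj2 U) a b = id2 a b)"

definition unitary1 :: "nat \<Rightarrow> op1 \<Rightarrow> bool" where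
  "unitary1 q u \<longleftrightarrow>
     (\<forall>i<q. \<forall>j<q. (\<Sum>k<q. cnj (u k i) * u k j) = (if i = j then 1 else 0)) \<and>
     (\<forall>i<q. \<forall>j<q. (\<Sum>k<q. u i k * cnj (u j k)) = (if i = j then 1 else 0))"

definition realign :: "op2 \<Rightarrow> op2" where
  "realign X = (\<lambda>(\<beta>, \<alpha>) (j, i). X (i, \<alpha>) (j, \<beta>))"

definition dual_unitary :: "nat \<Rightarrow> op2 \<Rightarrow> bool" where
  "dual_unitary q U \<longleftrightarrow> unitary2 q U \<and> unitary2 q (realign U)"

text \<open>Swap: S|phi>|psi> = |psi>|phi>, i.e. <i a|S|j b> = [i=b][a=j].\<close>
definition swap2 :: op2 where
  "swap2 = (\<lambda>(i, \<alpha>) (j, \<beta>). if i = \<beta> \<and> \<alpha> = j then 1 else 0)"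

definition opent :: "nat \<Rightarrow> op2 \<Rightarrow> real" where
  "opent q U = 1 - Re (trace2 q (let R = mult2 q (realign U) (adj2 (realign U)) in mult2 q R R))
                   / (real q) ^ 4"

definition ent_power :: "nat \<Rightarrow> op2 \<Rightarrow> real" where
  "ent_power q U = (opent q U + opent q (mult2 q U swap2) - opent q swap2) / (1 - 1 / (real q)^2)"

definition tensor :: "op1 \<Rightarrow> op1 \<Rightarrow> op2" where
  "tensor a b = (\<lambda>(i, \<alpha>) (j, \<beta>). a i j * b \<alpha> \<beta>)"

definition id1 :: op1 where
  "id1 = (\<lambda>i j. if i = j then 1 else 0)"

definition ptr1 :: "nat \<Rightarrow> op2 \<Rightarrow> op1" where
  "ptr1 q X = (\<lambda>\<alpha> \<beta>. \<Sum>i<q. X (i, \<alpha>) (i, \<beta>))"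

definition ptr2 :: "nat \<Rightarrow> op2 \<Rightarrow> op1" where
  "ptr2 q X = (\<lambda>i j. \<Sum>\<alpha><q. X (i, \<alpha>) (j, \<alpha>))"

definition Mplus :: "nat \<Rightarrow> op2 \<Rightarrow> op1 \<Rightarrow> op1" where
  "Mplus q U a = (\<lambda>m n. ptr1 q (mult2 q (adj2 U) (mult2 q (tensor a id1) U)) m n / of_nat q)"

definition Mminus :: "nat \<Rightarrow> op2 \<Rightarrow> op1 \<Rightarrow> op1" where
  "Mminus q U a = (\<lambda>m n. ptr2 q (mult2 q (adj2 U) (mult2 q (tensor id1 a) U)) m n / of_nat q)"

definition Pmap :: "nat \<Rightarrow> op1 \<Rightarrow> op1" where
  "Pmap q a = (\<lambda>m n. (\<Sum>k<q. a k k) * id1 m n / of_nat q)"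

definition unit_mat :: "nat \<Rightarrow> nat \<Rightarrow> op1" where
  "unit_mat j l = (\<lambda>m n. if m = j \<and> n = l then 1 else 0)"

definition hs_norm2 :: "nat \<Rightarrow> (op1 \<Rightarrow> op1) \<Rightarrow> complex" where
  "hs_norm2 q N = (\<Sum>j<q. \<Sum>l<q. \<Sum>m<q. \<Sum>n<q.
       cnj (N (unit_mat j l) n m) * N (unit_mat j l) n m)"

end

theory Submission
  imports Defs
begin

lemma sum_idx2: "(\<Sum>a\<in>idx2 q. f a) = (\<Sum>i<q. \<Sum>j<q. f (i,j))"
  by (simp add: idx2_def sum.cartesian_product)

lemma mult_if0: "(if P then x else 0) * (y::complex) = (if P then x * y else 0)"
  "y * (if P then x else 0) = (if P then y * x else 0)"
  by auto

lemma sum_if_const: "(\<Sum>x\<in>A. if P then f x else (0::complex)) = (if P then (\<Sum>x\<in>A. f x) else 0)"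
  by auto

lemma mult_adj: "mult2 q (adj2 U) X a b = (\<Sum>c1<q. \<Sum>c2<q. cnj (U (c1,c2) a) * X (c1,c2) b)"
  by (simp add: mult2_def adj2_def sum_idx2)

lemma mult_tensorL:
  assumes "c2 < q" "l < q"
  shows "mult2 q (tensor (unit_mat j l) id1) U (c1,c2) b = (if c1 = j then U (l,c2) b else 0)"
proof -
  have "mult2 q (tensor (unit_mat j l) id1) U (c1,c2) b
      = (\<Sum>d1<q. \<Sum>d2<q. (if c1 = j then (if d1 = l then (if d2 = c2 then U (d1,d2) b else 0) else 0) else 0))"
    unfolding mult2_def sum_idx2 tensor_def unit_mat_def id1_def
    by (intro sum.cong refl) auto
  also have "\<dots> = (if c1 = j then U (l,c2) b else 0)"
    using assms by (simp add: sum_if_const sum.delta' sum.delta cong: if_cong)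
  finally show ?thesis .
qed

lemma mult_tensorR:
  assumes "c1 < q" "l < q"
  shows "mult2 q (tensor id1 (unit_mat j l)) U (c1,c2) b = (if c2 = j then U (c1,l) b else 0)"
proof -
  have "mult2 q (tensor id1 (unit_mat j l)) U (c1,c2) b
      = (\<Sum>d1<q. \<Sum>d2<q. (if c2 = j then (if d1 = c1 then (if d2 = l then U (d1,d2) b else 0) else 0) else 0))"
    unfolding mult2_def sum_idx2 tensor_def unit_mat_def id1_def
    by (intro sum.cong refl) auto
  also have "\<dots> = (if c2 = j then U (c1,l) b else 0)"
    using assms by (simp add: sum_if_const sum.delta' sum.delta cong: if_cong)
  finally show ?thesis .
qed

lemma Mplus_unit:
  assumes "j < q" "l < q"
  shows "Mplus q U (unit_mat j l) m n = (\<Sum>i<q. \<Sum>a<q. cnj (U (j,a) (i,m)) * U (l,a) (i,n)) / of_nat q"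
proof -
  have "Mplus q U (unit_mat j l) m n = (\<Sum>i<q. \<Sum>c1<q. \<Sum>c2<q. cnj (U (c1,c2) (i,m)) * (if c1 = j then U (l,c2) (i,n) else 0)) / of_nat q"
    unfolding Mplus_def ptr1_def mult_adj using assms by (simp add: mult_tensorL)
  also have "\<dots> = (\<Sum>i<q. \<Sum>a<q. cnj (U (j,a) (i,m)) * U (l,a) (i,n)) / of_nat q"
    using assms by (simp add: mult_if0 sum_if_const sum.delta' sum.delta cong: if_cong)
  finally show ?thesis .
qed

lemma Mminus_unit:
  assumes "j < q" "l < q"
  shows "Mminus q U (unit_mat j l) m n = (\<Sum>i<q. \<Sum>a<q. cnj (U (i,j) (m,a)) * U (i,l) (n,a)) / of_nat q"
proof -
  have "Mminus q U (unit_mat j l) m n = (\<Sum>a<q. \<Sum>c1<q. \<Sum>c2<q. cnj (U (c1,c2) (m,a)) * (if c2 = j then U (c1,l) (n,a) else 0)) / of_nat q"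
    unfolding Mminus_def ptr2_def mult_adj using assms by (simp add: mult_tensorR)
  also have "\<dots> = (\<Sum>a<q. \<Sum>i<q. cnj (U (i,j) (m,a)) * U (i,l) (n,a)) / of_nat q"
    using assms by (simp add: mult_if0 sum_if_const sum.delta' sum.delta cong: if_cong)
  also have "\<dots> = (\<Sum>i<q. \<Sum>a<q. cnj (U (i,j) (m,a)) * U (i,l) (n,a)) / of_nat q"
    by (subst sum.swap) (rule refl)
  finally show ?thesis .
qed

definition KK :: "nat \<Rightarrow> op2 \<Rightarrow> complex" where
  "KK q U = (\<Sum>i<q. \<Sum>a<q. \<Sum>b<q. \<Sum>j<q. \<Sum>i'<q. \<Sum>a'<q. \<Sum>b'<q. \<Sum>j'<q.
     U (i,a) (b,j) * cnj (U (i,a') (b',j)) * U (i',a') (b',j') * cnj (U (i',a) (b,j')))"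

lemma cnj_ss: "cnj (\<Sum>i<q. \<Sum>a<q. f i a) * (\<Sum>i<q. \<Sum>a<q. g i a)
   = (\<Sum>i<q. \<Sum>a<q. \<Sum>i'<q. \<Sum>a'<q. cnj (f i a) * g i' a')"
  by (simp only: cnj_sum sum_distrib_right) (simp only: sum_distrib_left)

lemma cnj_div_sq: "cnj (X / of_nat q) * (Y / of_nat q) = cnj X * Y / (of_nat q)^2"
  by (simp add: power2_eq_square)

lemma hs_plus: "hs_norm2 q (Mplus q U) = KK q U / (of_nat q)^2"
proof -
  have "hs_norm2 q (Mplus q U) = (\<Sum>j<q. \<Sum>l<q. \<Sum>m<q. \<Sum>n<q.
      cnj ((\<Sum>i<q. \<Sum>a<q. cnj (U (j,a) (i,n)) * U (l,a) (i,m)) / of_nat q) *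
         ((\<Sum>i<q. \<Sum>a<q. cnj (U (j,a) (i,n)) * U (l,a) (i,m)) / of_nat q))"
    unfolding hs_norm2_def by (intro sum.cong refl) (simp add: Mplus_unit)
  also have "\<dots> = (\<Sum>j<q. \<Sum>l<q. \<Sum>m<q. \<Sum>n<q. \<Sum>i<q. \<Sum>a<q. \<Sum>i'<q. \<Sum>a'<q.
      U (j,a) (i,n) * cnj (U (l,a) (i,m)) * cnj (U (j,a') (i',n)) * U (l,a') (i',m)) / (of_nat q)^2"
    unfolding sum_divide_distrib[symmetric] cnj_div_sq cnj_ss
    by (intro sum.cong refl arg_cong[where f="\<lambda>x. x / _"]) (simp add: mult.commute mult.left_commute)
  also have "(\<Sum>j<q. \<Sum>l<q. \<Sum>m<q. \<Sum>n<q. \<Sum>i<q. \<Sum>a<q. \<Sum>i'<q. \<Sum>a'<q.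
      U (j,a) (i,n) * cnj (U (l,a) (i,m)) * cnj (U (j,a') (i',n)) * U (l,a') (i',m)) = KK q U"
    unfolding KK_def
    apply (simp only: sum.cartesian_product)
    apply (rule sum.reindex_bij_witness[where j="\<lambda>(j,l,m,n,i,a,i',a'). (j,a,i,n,l,a',i',m)"
        and i="\<lambda>(iK,aK,bK,jK,i'K,a'K,b'K,j'K). (iK,i'K,j'K,jK,bK,aK,b'K,a'K)"])
    apply (auto simp: mult.commute mult.left_commute)
    done
  finally show ?thesis .
qed

lemma hs_minus: "hs_norm2 q (Mminus q U) = KK q U / (of_nat q)^2"
proof -
  have "hs_norm2 q (Mminus q U) = (\<Sum>j<q. \<Sum>l<q. \<Sum>m<q. \<Sum>n<q.
      cnj ((\<Sum>i<q. \<Sum>a<q. cnj (U (i,j) (n,a)) * U (i,l) (m,a)) / of_nat q) *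
         ((\<Sum>i<q. \<Sum>a<q. cnj (U (i,j) (n,a)) * U (i,l) (m,a)) / of_nat q))"
    unfolding hs_norm2_def by (intro sum.cong refl) (simp add: Mminus_unit)
  also have "\<dots> = (\<Sum>j<q. \<Sum>l<q. \<Sum>m<q. \<Sum>n<q. \<Sum>i<q. \<Sum>a<q. \<Sum>i'<q. \<Sum>a'<q.
      U (i,j) (n,a) * cnj (U (i,l) (m,a)) * cnj (U (i',j) (n,a')) * U (i',l) (m,a')) / (of_nat q)^2"
    unfolding sum_divide_distrib[symmetric] cnj_div_sq cnj_ss
    by (intro sum.cong refl arg_cong[where f="\<lambda>x. x / _"]) (simp add: mult.commute mult.left_commute)
  also have "(\<Sum>j<q. \<Sum>l<q. \<Sum>m<q. \<Sum>n<q. \<Sum>i<q. \<Sum>a<q. \<Sum>i'<q. \<Sum>a'<q.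
      U (i,j) (n,a) * cnj (U (i,l) (m,a)) * cnj (U (i',j) (n,a')) * U (i',l) (m,a')) = KK q U"
    unfolding KK_def
    apply (simp only: sum.cartesian_product)
    apply (rule sum.reindex_bij_witness[where j="\<lambda>(j,l,m,n,i,a,i',a'). (i,j,n,a,i',l,m,a')"
        and i="\<lambda>(iK,aK,bK,jK,i'K,a'K,b'K,j'K). (aK,a'K,b'K,bK,iK,jK,i'K,j'K)"])
    apply (auto simp: mult.commute mult.left_commute)
    done
  finally show ?thesis .
qed

lemma hs_real: "hs_norm2 q N = of_real (Re (hs_norm2 q N))"
proof -
  have "Im (hs_norm2 q N) = 0"
    unfolding hs_norm2_def by (simp add: Im_sum)
  then show ?thesis by (simp add: complex_eq_iff)
qed

definition DD :: "nat \<Rightarrow> op2 \<Rightarrow> complex" where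
  "DD q U = (\<Sum>i<q. \<Sum>a<q. \<Sum>b<q. \<Sum>j<q. U (i,a) (b,j) * cnj (U (i,a) (b,j)))"

lemma Pmap_unit: "j < q \<Longrightarrow> Pmap q (unit_mat j l) n m = (if j = l then if n = m then 1 / of_nat q else 0 else 0)"
proof -
  assume j: "j < q"
  have "(\<Sum>k<q. unit_mat j l k k) = (if j = l then 1 else 0)"
    using j by (cases "j = l") (auto simp: unit_mat_def intro!: sum.neutral)
  then show ?thesis by (simp add: Pmap_def id1_def)
qed

lemma diag_sum: "(\<Sum>j<q. \<Sum>n<q. Mplus q U (unit_mat j j) n n) = DD q U / of_nat q"
proof -
  have "(\<Sum>j<q. \<Sum>n<q. Mplus q U (unit_mat j j) n n)
     = (\<Sum>j<q. \<Sum>n<q. \<Sum>i<q. \<Sum>a<q. cnj (U (j,a) (i,n)) * U (j,a) (i,n)) / of_nat q"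
    unfolding sum_divide_distrib by (intro sum.cong refl) (simp add: Mplus_unit sum_divide_distrib)
  also have "(\<Sum>j<q. \<Sum>n<q. \<Sum>i<q. \<Sum>a<q. cnj (U (j,a) (i,n)) * U (j,a) (i,n)) = DD q U"
    unfolding DD_def
    apply (simp only: sum.cartesian_product)
    apply (rule sum.reindex_bij_witness[where j="\<lambda>(j,n,i,a). (j,a,i,n)"
        and i="\<lambda>(j,a,i,n). (j,n,i,a)"])
    apply (auto simp: mult.commute)
    done
  finally show ?thesis .
qed

lemma hs_minusP:
  assumes "DD q U = (of_nat q)^2" "q > 0"
  shows "hs_norm2 q (\<lambda>a m n. Mplus q U a m n - Pmap q a m n) = hs_norm2 q (Mplus q U) - 1"
proof -
  define M where "M j l n m = Mplus q U (unit_mat j l) n m" for j l n m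
  define f where "f j n = (M j j n n + cnj (M j j n n)) / of_nat q - 1 / (of_nat q)^2" for j n
  have t: "cnj (Mplus q U (unit_mat j l) n m - Pmap q (unit_mat j l) n m) *
            (Mplus q U (unit_mat j l) n m - Pmap q (unit_mat j l) n m)
        = cnj (M j l n m) * M j l n m - (if j = l then if n = m then f j n else 0 else 0)"
    if "j < q" for j l n m
    using that assms(2) unfolding M_def[symmetric]
    by (auto simp add: Pmap_unit f_def field_simps power2_eq_square)
  have "hs_norm2 q (\<lambda>a m n. Mplus q U a m n - Pmap q a m n)
     = (\<Sum>j<q. \<Sum>l<q. \<Sum>m<q. \<Sum>n<q. cnj (M j l n m) * M j l n m - (if j = l then if n = m then f j n else 0 else 0))"
    unfolding hs_norm2_def by (intro sum.cong refl) (simp only: lessThan_iff t)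
  also have "\<dots> = hs_norm2 q (Mplus q U) - (\<Sum>j<q. \<Sum>l<q. \<Sum>m<q. \<Sum>n<q. (if j = l then if n = m then f j n else 0 else 0))"
    unfolding hs_norm2_def M_def by (simp add: sum_subtractf)
  also have "(\<Sum>j<q. \<Sum>l<q. \<Sum>m<q. \<Sum>n<q. (if j = l then if n = m then f j n else 0 else 0)) = (\<Sum>j<q. \<Sum>n<q. f j n)"
    by (simp add: sum_if_const sum.delta sum.delta' cong: if_cong)
  also have "(\<Sum>j<q. \<Sum>n<q. f j n) = 1"
  proof -
    have d: "(\<Sum>j<q. \<Sum>n<q. M j j n n) = of_nat q"
      using diag_sum[of q U] assms unfolding M_def by (simp add: power2_eq_square)
    have dc: "(\<Sum>j<q. \<Sum>n<q. cnj (M j j n n)) = of_nat q"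
      using arg_cong[OF d, of cnj] by (simp add: cnj_sum)
    have "(\<Sum>j<q. \<Sum>n<q. f j n) = ((\<Sum>j<q. \<Sum>n<q. M j j n n) + (\<Sum>j<q. \<Sum>n<q. cnj (M j j n n))) / of_nat q
        - (of_nat q)^2 / (of_nat q)^2"
      unfolding f_def by (simp add: sum_subtractf sum.distrib sum_divide_distrib add_divide_distrib power2_eq_square)
    also have "\<dots> = 1" using assms(2) by (simp add: d dc)
    finally show ?thesis .
  qed
  finally show ?thesis .
qed

lemma finite_idx2: "finite (idx2 q)"
  by (simp add: idx2_def)

lemma card_idx2: "card (idx2 q) = q * q"
  by (simp add: idx2_def card_cartesian_product)

lemma trace_unitary:
  assumes "unitary2 q X"
  shows "trace2 q (let R = mult2 q X (adj2 X) in mult2 q R R) = of_nat (q * q)"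
proof -
  have R: "mult2 q X (adj2 X) a b = id2 a b" if "a \<in> idx2 q" "b \<in> idx2 q" for a b
    using assms that unfolding unitary2_def by blast
  have "mult2 q (mult2 q X (adj2 X)) (mult2 q X (adj2 X)) a a = 1" if "a \<in> idx2 q" for a
  proof -
    have "mult2 q (mult2 q X (adj2 X)) (mult2 q X (adj2 X)) a a = (\<Sum>c\<in>idx2 q. id2 a c * id2 c a)"
      unfolding mult2_def[of q "mult2 q X (adj2 X)"] using that by (intro sum.cong refl) (simp add: R)
    also have "\<dots> = (\<Sum>c\<in>idx2 q. if c = a then 1 else 0)"
      by (intro sum.cong refl) (auto simp: id2_def)
    also have "\<dots> = 1" using that by (simp add: sum.delta finite_idx2)
    finally show ?thesis .
  qed
  then have "trace2 q (let R = mult2 q X (adj2 X) in mult2 q R R) = (\<Sum>a\<in>idx2 q. 1)"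
    unfolding trace2_def Let_def by (intro sum.cong refl) simp
  also have "\<dots> = of_nat (q * q)" by (simp add: card_idx2)
  finally show ?thesis .
qed

lemma opent_unitary:
  assumes "unitary2 q (realign X)" "q > 0"
  shows "opent q X = 1 - 1 / (real q)^2"
proof -
  have "Re (trace2 q (let R = mult2 q (realign X) (adj2 (realign X)) in mult2 q R R)) = real q * real q"
    using trace_unitary[OF assms(1)] by simp
  moreover have "(real q)^4 = (real q)^2 * (real q)^2" by algebra
  ultimately show ?thesis unfolding opent_def using assms(2) by (simp add: field_simps power2_eq_square)
qed

lemma realign_swap: "realign swap2 = swap2"
  by (auto simp: realign_def swap2_def fun_eq_iff)

lemma ite_simps:
  "(if P then y else 0) * (x::complex) = (if P then y * x else 0)"
  "x * (if P then y else 0) = (if P then x * y else 0)"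
  "cnj (if P then y else 0) = (if P then cnj y else 0)"
  "(if P \<and> Q then x else 0) = (if P then if Q then x else 0 else 0)"
  by auto

lemma unitary_swap: "unitary2 q swap2"
proof -
  have 1: "mult2 q (adj2 swap2) swap2 (a1,a2) (b1,b2) = id2 (a1,a2) (b1,b2)" if "a1 < q" "a2 < q" for a1 a2 b1 b2
    using that unfolding mult2_def adj2_def swap2_def sum_idx2 id2_def
    by (simp add: ite_simps sum_if_const sum.delta sum.delta' cong: if_cong)
  have 2: "mult2 q swap2 (adj2 swap2) (a1,a2) (b1,b2) = id2 (a1,a2) (b1,b2)" if "a1 < q" "a2 < q" for a1 a2 b1 b2
    using that unfolding mult2_def adj2_def swap2_def sum_idx2 id2_def
    by (simp add: ite_simps sum_if_const sum.delta sum.delta' cong: if_cong)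
  show ?thesis unfolding unitary2_def idx2_def using 1 2 by auto
qed

lemma opent_swap: "q > 0 \<Longrightarrow> opent q swap2 = 1 - 1 / (real q)^2"
  using opent_unitary[of q swap2] by (simp add: realign_swap unitary_swap)

lemma X_val: "b < q \<Longrightarrow> j < q \<Longrightarrow> realign (mult2 q U swap2) (b,a) (j,i) = U (i,a) (b,j)"
  unfolding realign_def mult2_def sum_idx2 swap2_def
  by (simp add: ite_simps sum_if_const sum.delta sum.delta' cong: if_cong)

lemma ss_prod: "(\<Sum>i<q. \<Sum>a<q. f i a) * (\<Sum>i<q. \<Sum>a<q. g i a)
   = (\<Sum>i<q. \<Sum>a<q. \<Sum>i'<q. \<Sum>a'<q. f i a * (g i' a' :: complex))"
  by (simp only: sum_distrib_right) (simp only: sum_distrib_left)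

lemma trace_US: "trace2 q (let R = mult2 q (realign (mult2 q U swap2)) (adj2 (realign (mult2 q U swap2))) in mult2 q R R) = KK q U"
proof -
  define X where "X = realign (mult2 q U swap2)"
  have Xv: "X (b,a) (j,i) = U (i,a) (b,j)" if "b < q" "j < q" for b a j i
    unfolding X_def using that by (rule X_val)
  have "trace2 q (let R = mult2 q X (adj2 X) in mult2 q R R)
     = (\<Sum>b<q. \<Sum>a<q. \<Sum>b'<q. \<Sum>a'<q. (\<Sum>j<q. \<Sum>i<q. U (i,a) (b,j) * cnj (U (i,a') (b',j))) *
          (\<Sum>j'<q. \<Sum>i'<q. U (i',a') (b',j') * cnj (U (i',a) (b,j'))))"
    unfolding trace2_def mult2_def adj2_def sum_idx2 Let_def by (simp add: Xv)
  also have "\<dots> = (\<Sum>b<q. \<Sum>a<q. \<Sum>b'<q. \<Sum>a'<q. \<Sum>j<q. \<Sum>i<q. \<Sum>j'<q. \<Sum>i'<q. 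
          U (i,a) (b,j) * cnj (U (i,a') (b',j)) * (U (i',a') (b',j') * cnj (U (i',a) (b,j'))))"
    by (simp only: ss_prod)
  also have "\<dots> = KK q U"
    unfolding KK_def
    apply (simp only: sum.cartesian_product)
    apply (rule sum.reindex_bij_witness[where j="\<lambda>(b,a,b',a',j,i,j',i'). (i,a,b,j,i',a',b',j')"
        and i="\<lambda>(i,a,b,j,i',a',b',j'). (b,a,b',a',j,i,j',i')"])
    apply (auto simp: mult.assoc)
    done
  finally show ?thesis unfolding X_def .
qed

definition L1 :: "nat \<Rightarrow> op1 \<Rightarrow> op2 \<Rightarrow> op2" where
  "L1 q u U = (\<lambda>(a1,a2) b. \<Sum>c<q. u a1 c * U (c,a2) b)"
definition L2 :: "nat \<Rightarrow> op1 \<Rightarrow> op2 \<Rightarrow> op2" where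
  "L2 q u U = (\<lambda>(a1,a2) b. \<Sum>c<q. u a2 c * U (a1,c) b)"
definition R1 :: "nat \<Rightarrow> op1 \<Rightarrow> op2 \<Rightarrow> op2" where
  "R1 q v U = (\<lambda>a (b1,b2). \<Sum>d<q. U a (d,b2) * v d b1)"
definition R2 :: "nat \<Rightarrow> op1 \<Rightarrow> op2 \<Rightarrow> op2" where
  "R2 q v U = (\<lambda>a (b1,b2). \<Sum>d<q. U a (b1,d) * v d b2)"

lemma L1_val: "L1 q u U (i,a) b = (\<Sum>c<q. u i c * U (c,a) b)" by (simp add: L1_def)
lemma L2_val: "L2 q u U (i,a) b = (\<Sum>c<q. u a c * U (i,c) b)" by (simp add: L2_def)
lemma R1_val: "R1 q v U a (b,j) = (\<Sum>d<q. U a (d,j) * v d b)" by (simp add: R1_def)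
lemma R2_val: "R2 q v U a (b,j) = (\<Sum>d<q. U a (b,d) * v d j)" by (simp add: R2_def)

lemma comp_local: "mult2 q (tensor u1 u2) (mult2 q U (tensor v1 v2)) a b = L1 q u1 (L2 q u2 (R1 q v1 (R2 q v2 U))) a b"
proof -
  obtain a1 a2 b1 b2 where ab: "a = (a1,a2)" "b = (b1,b2)" by fastforce
  show ?thesis unfolding ab
    by (simp add: mult2_def sum_idx2 tensor_def L1_def L2_def R1_def R2_def sum_distrib_left sum_distrib_right mult.assoc mult.commute mult.left_commute)
qed

lemma ip_left:
  assumes "unitary1 q u"
  shows "(\<Sum>i<q. (\<Sum>c<q. u i c * f c) * cnj (\<Sum>c<q. u i c * g c)) = (\<Sum>c<q. f c * cnj (g c))"
proof -
  have U1: "(\<Sum>k<q. cnj (u k i) * u k j) = (if i = j then 1 else 0)" if "i < q" "j < q" for i j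
    using assms that unfolding unitary1_def by blast
  have "(\<Sum>i<q. (\<Sum>c<q. u i c * f c) * cnj (\<Sum>c<q. u i c * g c))
      = (\<Sum>i<q. \<Sum>c<q. \<Sum>c'<q. (cnj (u i c') * u i c) * (f c * cnj (g c')))"
    by (simp add: cnj_sum sum_product mult.commute mult.left_commute)
  also have "\<dots> = (\<Sum>c<q. \<Sum>c'<q. \<Sum>i<q. (cnj (u i c') * u i c) * (f c * cnj (g c')))"
    apply (rule trans[OF sum.swap])
    apply (rule sum.cong[OF refl])
    apply (rule sum.swap)
    done
  also have "\<dots> = (\<Sum>c<q. \<Sum>c'<q. (if c' = c then 1 else 0) * (f c * cnj (g c')))"
    by (intro sum.cong refl) (simp add: sum_distrib_right[symmetric] U1)
  also have "\<dots> = (\<Sum>c<q. f c * cnj (g c))"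
    by (simp add: ite_simps sum.delta cong: if_cong)
  finally show ?thesis .
qed

lemma ip_right:
  assumes "unitary1 q v"
  shows "(\<Sum>b<q. (\<Sum>d<q. f d * v d b) * cnj (\<Sum>d<q. g d * v d b)) = (\<Sum>d<q. f d * cnj (g d))"
proof -
  have U1: "(\<Sum>k<q. v i k * cnj (v j k)) = (if i = j then 1 else 0)" if "i < q" "j < q" for i j
    using assms that unfolding unitary1_def by blast
  have "(\<Sum>b<q. (\<Sum>d<q. f d * v d b) * cnj (\<Sum>d<q. g d * v d b))
      = (\<Sum>b<q. \<Sum>d<q. \<Sum>d'<q. (v d b * cnj (v d' b)) * (f d * cnj (g d')))"
    by (simp add: cnj_sum sum_product mult.commute mult.left_commute)
  also have "\<dots> = (\<Sum>d<q. \<Sum>d'<q. \<Sum>b<q. (v d b * cnj (v d' b)) * (f d * cnj (g d')))"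
    apply (rule trans[OF sum.swap])
    apply (rule sum.cong[OF refl])
    apply (rule sum.swap)
    done
  also have "\<dots> = (\<Sum>d<q. \<Sum>d'<q. (if d = d' then 1 else 0) * (f d * cnj (g d')))"
    by (intro sum.cong refl) (simp add: sum_distrib_right[symmetric] U1)
  also have "\<dots> = (\<Sum>d<q. f d * cnj (g d))"
    by (simp add: ite_simps sum.delta' cong: if_cong)
  finally show ?thesis .
qed

lemma K1: "KK q U = (\<Sum>a<q. \<Sum>b<q. \<Sum>j<q. \<Sum>a'<q. \<Sum>b'<q. \<Sum>j'<q.
   (\<Sum>i<q. U (i,a) (b,j) * cnj (U (i,a') (b',j))) * (\<Sum>i'<q. U (i',a') (b',j') * cnj (U (i',a) (b,j'))))"
  unfolding KK_def
  apply (simp only: sum_product sum.cartesian_product)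
  apply (rule sum.reindex_bij_witness[where i="\<lambda>(a,b,j,a',b',j',i,i'). (i,a,b,j,i',a',b',j')"
        and j="\<lambda>(i,a,b,j,i',a',b',j'). (a,b,j,a',b',j',i,i')"])
  apply (auto simp: mult.assoc)
  done

lemma K2: "KK q U = (\<Sum>i<q. \<Sum>b<q. \<Sum>j<q. \<Sum>i'<q. \<Sum>b'<q. \<Sum>j'<q.
   (\<Sum>a<q. U (i,a) (b,j) * cnj (U (i',a) (b,j'))) * (\<Sum>a'<q. U (i',a') (b',j') * cnj (U (i,a') (b',j))))"
  unfolding KK_def
  apply (simp only: sum_product sum.cartesian_product)
  apply (rule sum.reindex_bij_witness[where i="\<lambda>(i,b,j,i',b',j',a,a'). (i,a,b,j,i',a',b',j')"
        and j="\<lambda>(i,a,b,j,i',a',b',j'). (i,b,j,i',b',j',a,a')"])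
  apply (auto simp: mult.assoc mult.commute mult.left_commute)
  done

lemma K3: "KK q U = (\<Sum>i<q. \<Sum>a<q. \<Sum>j<q. \<Sum>i'<q. \<Sum>a'<q. \<Sum>j'<q.
   (\<Sum>b<q. U (i,a) (b,j) * cnj (U (i',a) (b,j'))) * (\<Sum>b'<q. U (i',a') (b',j') * cnj (U (i,a') (b',j))))"
  unfolding KK_def
  apply (simp only: sum_product sum.cartesian_product)
  apply (rule sum.reindex_bij_witness[where i="\<lambda>(i,a,j,i',a',j',b,b'). (i,a,b,j,i',a',b',j')"
        and j="\<lambda>(i,a,b,j,i',a',b',j'). (i,a,j,i',a',j',b,b')"])
  apply (auto simp: mult.assoc mult.commute mult.left_commute)
  done

lemma K4: "KK q U = (\<Sum>i<q. \<Sum>a<q. \<Sum>b<q. \<Sum>i'<q. \<Sum>a'<q. \<Sum>b'<q.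
   (\<Sum>j<q. U (i,a) (b,j) * cnj (U (i,a') (b',j))) * (\<Sum>j'<q. U (i',a') (b',j') * cnj (U (i',a) (b,j'))))"
  unfolding KK_def
  apply (simp only: sum_product sum.cartesian_product)
  apply (rule sum.reindex_bij_witness[where i="\<lambda>(i,a,b,i',a',b',j,j'). (i,a,b,j,i',a',b',j')"
        and j="\<lambda>(i,a,b,j,i',a',b',j'). (i,a,b,i',a',b',j,j')"])
  apply (auto simp: mult.assoc)
  done

lemma KK_L1: "unitary1 q u \<Longrightarrow> KK q (L1 q u U) = KK q U"
  by (simp only: K1[of q "L1 q u U"] K1[of q U] L1_val ip_left)
lemma KK_L2: "unitary1 q u \<Longrightarrow> KK q (L2 q u U) = KK q U"
  by (simp only: K2[of q "L2 q u U"] K2[of q U] L2_val ip_left)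
lemma KK_R1: "unitary1 q u \<Longrightarrow> KK q (R1 q u U) = KK q U"
  by (simp only: K3[of q "R1 q u U"] K3[of q U] R1_val ip_right)
lemma KK_R2: "unitary1 q u \<Longrightarrow> KK q (R2 q u U) = KK q U"
  by (simp only: K4[of q "R2 q u U"] K4[of q U] R2_val ip_right)

lemma D1: "DD q U = (\<Sum>a<q. \<Sum>b<q. \<Sum>j<q. (\<Sum>i<q. U (i,a) (b,j) * cnj (U (i,a) (b,j))))"
  unfolding DD_def
  apply (simp only: sum.cartesian_product)
  apply (rule sum.reindex_bij_witness[where i="\<lambda>(a,b,j,i). (i,a,b,j)" and j="\<lambda>(i,a,b,j). (a,b,j,i)"])
  apply auto
  done
lemma D2: "DD q U = (\<Sum>i<q. \<Sum>b<q. \<Sum>j<q. (\<Sum>a<q. U (i,a) (b,j) * cnj (U (i,a) (b,j))))"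
  unfolding DD_def
  apply (simp only: sum.cartesian_product)
  apply (rule sum.reindex_bij_witness[where i="\<lambda>(i,b,j,a). (i,a,b,j)" and j="\<lambda>(i,a,b,j). (i,b,j,a)"])
  apply auto
  done
lemma D3: "DD q U = (\<Sum>i<q. \<Sum>a<q. \<Sum>j<q. (\<Sum>b<q. U (i,a) (b,j) * cnj (U (i,a) (b,j))))"
  unfolding DD_def
  apply (simp only: sum.cartesian_product)
  apply (rule sum.reindex_bij_witness[where i="\<lambda>(i,a,j,b). (i,a,b,j)" and j="\<lambda>(i,a,b,j). (i,a,j,b)"])
  apply auto
  done

lemma DD_L1: "unitary1 q u \<Longrightarrow> DD q (L1 q u U) = DD q U"
  by (simp only: D1[of q "L1 q u U"] D1[of q U] L1_val ip_left)
lemma DD_L2: "unitary1 q u \<Longrightarrow> DD q (L2 q u U) = DD q U"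
  by (simp only: D2[of q "L2 q u U"] D2[of q U] L2_val ip_left)
lemma DD_R1: "unitary1 q u \<Longrightarrow> DD q (R1 q u U) = DD q U"
  by (simp only: D3[of q "R1 q u U"] D3[of q U] R1_val ip_right)
lemma DD_R2: "unitary1 q u \<Longrightarrow> DD q (R2 q u U) = DD q U"
  by (simp only: DD_def R2_val ip_right)

lemma KK_cong: "(\<And>a b. a \<in> idx2 q \<Longrightarrow> b \<in> idx2 q \<Longrightarrow> U a b = V a b) \<Longrightarrow> KK q U = KK q V"
  unfolding KK_def idx2_def by (intro sum.cong refl) auto
lemma DD_cong: "(\<And>a b. a \<in> idx2 q \<Longrightarrow> b \<in> idx2 q \<Longrightarrow> U a b = V a b) \<Longrightarrow> DD q U = DD q V"
  unfolding DD_def idx2_def by (intro sum.cong refl) auto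

lemma DD_unitary:
  assumes "unitary2 q U"
  shows "DD q U = (of_nat q)^2"
proof -
  have d: "mult2 q (adj2 U) U (b,j) (b,j) = 1" if "b < q" "j < q" for b j
    using assms that unfolding unitary2_def idx2_def id2_def by auto
  have "DD q U = (\<Sum>b<q. \<Sum>j<q. \<Sum>i<q. \<Sum>a<q. cnj (U (i,a) (b,j)) * U (i,a) (b,j))"
    unfolding DD_def
    apply (simp only: sum.cartesian_product)
    apply (rule sum.reindex_bij_witness[where i="\<lambda>(b,j,i,a). (i,a,b,j)" and j="\<lambda>(i,a,b,j). (b,j,i,a)"])
    apply (auto simp: mult.commute)
    done
  also have "\<dots> = (\<Sum>b<q. \<Sum>j<q. mult2 q (adj2 U) U (b,j) (b,j))"
    by (simp add: mult_adj)
  also have "\<dots> = (\<Sum>b<q. \<Sum>j<q. 1)"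
    by (intro sum.cong refl) (simp add: d)
  finally show ?thesis by (simp add: power2_eq_square)
qed

lemma keyalg: fixes Q r :: real assumes "Q \<noteq> 0" "Q - 1 \<noteq> 0"
  shows "(Q - 1) * (1 - (1 - r/(Q*Q))/(1 - 1/Q)) = r/Q - 1"
proof -
  have "1 - 1/Q = (Q - 1)/Q" using assms by (simp add: field_simps)
  moreover have "1 - r/(Q*Q) = (Q*Q - r)/(Q*Q)" using assms by (simp add: field_simps)
  ultimately have "(1 - r/(Q*Q))/(1 - 1/Q) = (Q*Q - r)/(Q*(Q-1))" using assms by (simp add: field_simps)
  then have "(Q - 1) * (1 - (1 - r/(Q*Q))/(1 - 1/Q)) = (Q - 1) - (Q*Q - r)/Q" using assms by (simp add: field_simps)
  also have "\<dots> = r/Q - 1" using assms by (simp add: field_simps)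
  finally show ?thesis .
qed

theorem mainTheorem2:
  fixes q :: nat and U :: op2
  assumes "q \<ge> 2" and "dual_unitary q U"
  shows "hs_norm2 q (Mplus q U) = of_real (1 + ((real q)^2 - 1) * (1 - ent_power q U))
       \<and> hs_norm2 q (Mminus q U) = of_real (1 + ((real q)^2 - 1) * (1 - ent_power q U))
       \<and> hs_norm2 q (\<lambda>a m n. Mplus q U a m n - Pmap q a m n)
           = of_real (((real q)^2 - 1) * (1 - ent_power q U))
       \<and> (\<forall>u1 u2 v1 v2. unitary1 q u1 \<and> unitary1 q u2 \<and> unitary1 q v1 \<and> unitary1 q v2 \<longrightarrow>
            (let U' = mult2 q (tensor u1 u2) (mult2 q U (tensor v1 v2)) in
               hs_norm2 q (Mplus q U') = hs_norm2 q (Mplus q U)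
             \<and> hs_norm2 q (Mminus q U') = hs_norm2 q (Mminus q U)
             \<and> hs_norm2 q (\<lambda>a m n. Mplus q U' a m n - Pmap q a m n)
                 = hs_norm2 q (\<lambda>a m n. Mplus q U a m n - Pmap q a m n)))"
proof -
  have q0: "q > 0" and q2: "real q \<ge> 2" using assms(1) by auto
  have uU: "unitary2 q U" "unitary2 q (realign U)" using assms(2) unfolding dual_unitary_def by auto
  define r where "r = Re (KK q U)"
  have KKr: "KK q U = of_real r"
  proof -
    have "KK q U = hs_norm2 q (Mplus q U) * (of_nat q)^2" using hs_plus[of q U] q0 by simp
    also have "\<dots> = of_real (Re (hs_norm2 q (Mplus q U)) * (real q)^2)"
      by (subst hs_real) simp
    finally have "Im (KK q U) = 0" by simp
    then show ?thesis unfolding r_def by (simp add: complex_eq_iff)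
  qed
  have eUS: "opent q (mult2 q U swap2) = 1 - r / (real q)^4"
    unfolding opent_def trace_US r_def ..
  have ep: "ent_power q U = (1 - r / (real q)^4) / (1 - 1/(real q)^2)"
    unfolding ent_power_def eUS opent_unitary[OF uU(2) q0] opent_swap[OF q0] by simp
  have "(2::real)^2 \<le> (real q)^2" using power_mono[OF q2, of 2] by simp
  then have qq: "(real q)^2 - 1 \<noteq> 0" "real q \<noteq> 0" using q2 by auto
  have q4: "(real q)^4 = (real q)^2 * (real q)^2" by algebra
  have key: "((real q)^2 - 1) * (1 - ent_power q U) = r / (real q)^2 - 1"
  proof -
    have "(real q)^2 \<noteq> 0" using qq by simp
    from keyalg[OF this qq(1), of r] show ?thesis unfolding ep q4 .
  qed
  have A: "hs_norm2 q (Mplus q U) = of_real (r / (real q)^2)"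
    using hs_plus[of q U] KKr by simp
  have B: "hs_norm2 q (Mminus q U) = of_real (r / (real q)^2)"
    using hs_minus[of q U] KKr by simp
  have C: "hs_norm2 q (\<lambda>a m n. Mplus q U a m n - Pmap q a m n) = of_real (r / (real q)^2) - 1"
    using hs_minusP[OF DD_unitary[OF uU(1)] q0] A by simp
  have D: "(let U' = mult2 q (tensor u1 u2) (mult2 q U (tensor v1 v2)) in
               hs_norm2 q (Mplus q U') = hs_norm2 q (Mplus q U)
             \<and> hs_norm2 q (Mminus q U') = hs_norm2 q (Mminus q U)
             \<and> hs_norm2 q (\<lambda>a m n. Mplus q U' a m n - Pmap q a m n)
                 = hs_norm2 q (\<lambda>a m n. Mplus q U a m n - Pmap q a m n))"
    if u: "unitary1 q u1" "unitary1 q u2" "unitary1 q v1" "unitary1 q v2" for u1 u2 v1 v2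
  proof -
    define U' where "U' = mult2 q (tensor u1 u2) (mult2 q U (tensor v1 v2))"
    have KK': "KK q U' = KK q U"
    proof -
      have "KK q U' = KK q (L1 q u1 (L2 q u2 (R1 q v1 (R2 q v2 U))))"
        unfolding U'_def by (rule KK_cong) (rule comp_local)
      also have "\<dots> = KK q U" using u by (simp add: KK_L1 KK_L2 KK_R1 KK_R2)
      finally show ?thesis .
    qed
    have DD': "DD q U' = (of_nat q)^2"
    proof -
      have "DD q U' = DD q (L1 q u1 (L2 q u2 (R1 q v1 (R2 q v2 U))))"
        unfolding U'_def by (rule DD_cong) (rule comp_local)
      also have "\<dots> = DD q U" using u by (simp add: DD_L1 DD_L2 DD_R1 DD_R2)
      finally show ?thesis using DD_unitary[OF uU(1)] by simp
    qed
    have "hs_norm2 q (Mplus q U') = hs_norm2 q (Mplus q U)"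
      by (simp add: hs_plus KK')
    moreover have "hs_norm2 q (Mminus q U') = hs_norm2 q (Mminus q U)"
      by (simp add: hs_minus KK')
    moreover have "hs_norm2 q (\<lambda>a m n. Mplus q U' a m n - Pmap q a m n)
                 = hs_norm2 q (\<lambda>a m n. Mplus q U a m n - Pmap q a m n)"
      using hs_minusP[OF DD' q0] hs_minusP[OF DD_unitary[OF uU(1)] q0] \<open>hs_norm2 q (Mplus q U') = hs_norm2 q (Mplus q U)\<close>
      by simp
    ultimately show ?thesis unfolding U'_def Let_def by blast
  qed
  show ?thesis
  proof (intro conjI)
    show "hs_norm2 q (Mplus q U) = of_real (1 + ((real q)^2 - 1) * (1 - ent_power q U))"
      unfolding A key by simp
    show "hs_norm2 q (Mminus q U) = of_real (1 + ((real q)^2 - 1) * (1 - ent_power q U))"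
      unfolding B key by simp
    show "hs_norm2 q (\<lambda>a m n. Mplus q U a m n - Pmap q a m n) = of_real (((real q)^2 - 1) * (1 - ent_power q U))"
      unfolding C key by simp
    show "\<forall>u1 u2 v1 v2. unitary1 q u1 \<and> unitary1 q u2 \<and> unitary1 q v1 \<and> unitary1 q v2 \<longrightarrow>
            (let U' = mult2 q (tensor u1 u2) (mult2 q U (tensor v1 v2)) in
               hs_norm2 q (Mplus q U') = hs_norm2 q (Mplus q U)
             \<and> hs_norm2 q (Mminus q U') = hs_norm2 q (Mminus q U)
             \<and> hs_norm2 q (\<lambda>a m n. Mplus q U' a m n - Pmap q a m n)
                 = hs_norm2 q (\<lambda>a m n. Mplus q U a m n - Pmap q a m n))"
      using D by blast
  qed
qed

end
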